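(* Consider the equation $g(x,y)=1$ with $y\ge x\ge0$. (i) The maximum value of $x$ among its solutions is $x_{\max}=-1/\log(2q)=\lambda_0$, and the maximum value of $y$ among its solutions is $y_{\max}=-1/\log(q(1+2p))=:\kappa_0$. (ii) If $x=x_{\max}$ then $y=-1/(p\log(2q))$. If $y=y_{\max}=\kappa_0$ then $x=2\kappa_0p/(2p+1)$. If $x=0$ then $y=-1/\log q$. (iii) For given $x$, the equation has exactly one solution in $y$ for $0\le x<-1/\log(2pq)$ and for $x=\lambda_0$, and exactly two solutions in $y$ for $-1/\log(2pq)\le x<\lambda_0$.
   Context: Let $0<q<p<1$ with $p+q=1$, and $g(x,y)=x\log x-y\log y+(y-x)\log(y-x)-x\log(2p)-y\log q$ for $y\ge x\ge0$, with the convention $0\log0=0$. *)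

theory Defs
  imports Complex_Main
begin

definition xlogx :: "real \<Rightarrow> real" where
  "xlogx t = (if t = 0 then 0 else t * ln t)"

definition gfun :: "real \<Rightarrow> real \<Rightarrow> real \<Rightarrow> real \<Rightarrow> real" where
  "gfun p q x y = xlogx x - xlogx y + xlogx (y - x) - x * ln (2 * p) - y * ln q"

definition gsol :: "real \<Rightarrow> real \<Rightarrow> (real \<times> real) set" where
  "gsol p q = {(x, y). 0 \<le> x \<and> x \<le> y \<and> gfun p q x y = 1}"

end

theory Submission imports Defs begin



lemma ln_bound: fixes x z :: real assumes "x > 0" "z > 0" shows "x * ln (z / x) \<le> z - x"
    and "x * ln (z / x) = z - x \<Longrightarrow> z = x"
proof -
  have "ln (z/x) \<le> z/x - 1" using assms ln_le_minus_one[of "z/x"] by simp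
  then have "x * ln (z/x) \<le> x * (z/x - 1)" using assms by (intro mult_left_mono) auto
  moreover have "x * (z/x - 1) = z - x" using assms by (simp add: field_simps)
  ultimately show "x * ln (z / x) \<le> z - x" by linarith
  assume "x * ln (z / x) = z - x"
  then have "ln (z/x) = z/x - 1" using assms by (simp add: field_simps)
  then have "z/x = 1" using assms by (intro ln_eq_minus_one) auto
  then show "z = x" using assms by simp
qed

lemma KL:
  fixes a b x u :: real
  assumes "a > 0" "b > 0" "a + b = 1" "x \<ge> 0" "u \<ge> 0"
  shows "xlogx x + xlogx u - xlogx (x+u) - x*ln a - u*ln b \<ge> 0"
    and "xlogx x + xlogx u - xlogx (x+u) - x*ln a - u*ln b = 0 \<Longrightarrow> x = a*(x+u)"
proof -
  have la: "ln a < 0" and lb: "ln b < 0" using assms by auto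
  have "xlogx x + xlogx u - xlogx (x+u) - x*ln a - u*ln b \<ge> 0 \<and>
        (xlogx x + xlogx u - xlogx (x+u) - x*ln a - u*ln b = 0 \<longrightarrow> x = a*(x+u))"
  proof (cases "x = 0")
    case True
    show ?thesis
    proof (cases "u = 0")
      case True with \<open>x=0\<close> show ?thesis by (simp add: xlogx_def)
    next
      case False
      then have "u > 0" using assms by auto
      then have "- u * ln b > 0" using lb by (simp add: mult_pos_neg)
      then show ?thesis using \<open>x=0\<close> lb by (simp add: xlogx_def)
    qed
  next
    case False
    then have x0: "x > 0" using assms by auto
    show ?thesis
    proof (cases "u = 0")
      case True
      have "- x * ln a > 0" using la x0 by (simp add: mult_pos_neg)
      then show ?thesis using True la by (simp add: xlogx_def)
    next
      case False
      then have u0: "u > 0" using assms by auto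
      define y where "y = x + u"
      have y0: "y > 0" using x0 u0 y_def by simp
      have e1: "x * ln (a*y / x) = x * ln a + x * ln y - x * ln x"
        using x0 y0 assms by (simp add: ln_div ln_mult algebra_simps)
      have e2: "u * ln (b*y / u) = u * ln b + u * ln y - u * ln u"
        using u0 y0 assms by (simp add: ln_div ln_mult algebra_simps)
      have V: "xlogx x + xlogx u - xlogx (x+u) - x*ln a - u*ln b
           = - (x * ln (a*y / x) + u * ln (b*y / u))"
        using x0 u0 y0 unfolding e1 e2 by (simp add: xlogx_def y_def[symmetric] y_def algebra_simps)
      have b1: "x * ln (a*y / x) \<le> a*y - x" using ln_bound(1)[of x "a*y"] x0 y0 assms by simp
      have b2: "u * ln (b*y / u) \<le> b*y - u" using ln_bound(1)[of u "b*y"] u0 y0 assms by simp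
      have "a*y + b*y = y" using assms by (metis distrib_right mult_1)
      then have s: "a*y - x + (b*y - u) = 0" using y_def by linarith
      have "x * ln (a*y / x) + u * ln (b*y / u) = 0 \<Longrightarrow> x = a*(x+u)"
      proof -
        assume "x * ln (a*y / x) + u * ln (b*y / u) = 0"
        then have "x * ln (a*y / x) = a*y - x" using b1 b2 s by linarith
        then show ?thesis using ln_bound(2)[of x "a*y"] x0 y0 assms y_def by simp
      qed
      then show ?thesis unfolding V using b1 b2 s by linarith
    qed
  qed
  then show "xlogx x + xlogx u - xlogx (x+u) - x*ln a - u*ln b \<ge> 0"
    and "xlogx x + xlogx u - xlogx (x+u) - x*ln a - u*ln b = 0 \<Longrightarrow> x = a*(x+u)" by auto
qed


lemma tlnt0: "((\<lambda>t::real. t * ln t) \<longlongrightarrow> 0) (at_right 0)"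
proof -
  have "((\<lambda>t::real. ln (inverse t) / inverse t) \<longlongrightarrow> 0) (at_right 0)"
    using filterlim_compose[OF ln_x_over_x_tendsto_0 filterlim_inverse_at_top_right] by (simp add: o_def)
  then have "((\<lambda>t::real. - (ln (inverse t) / inverse t)) \<longlongrightarrow> 0) (at_right 0)"
    using tendsto_minus by fastforce
  moreover have "eventually (\<lambda>t::real. - (ln (inverse t) / inverse t) = t * ln t) (at_right 0)"
    by (auto simp: eventually_at_right_less ln_inverse divide_inverse elim!: eventually_mono[OF eventually_at_right_less] )
  ultimately show ?thesis by (rule Lim_transform_eventually)
qed

lemma xlogx_cont0: "continuous_on {0..B} xlogx"
proof (cases "B > 0")
  case True
  have "(xlogx \<longlongrightarrow> xlogx 0) (at_right 0)"
  proof -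
    have "eventually (\<lambda>t. t * ln t = xlogx t) (at_right (0::real))"
      by (auto simp: xlogx_def intro: eventually_mono[OF eventually_at_right_less])
    then show ?thesis using tlnt0 by (simp add: xlogx_def[of 0] tendsto_cong)
  qed
  moreover have ic: "\<And>c. 0 < c \<Longrightarrow> isCont xlogx c"
  proof -
    fix c :: real assume c: "0 < c"
    have "isCont (\<lambda>t. t * ln t) c" using c by (intro continuous_intros) auto
    moreover have ev: "eventually (\<lambda>t. t * ln t = xlogx t) (nhds c)"
      using eventually_nhds_in_open[of "{0<..}" c] c
      by (auto simp: xlogx_def elim!: eventually_mono)
    ultimately show "isCont xlogx c"
      using isCont_cong[OF ev] by simp
  qed
  moreover have "(xlogx \<longlongrightarrow> xlogx B) (at_left B)"
    using ic[OF True] by (simp add: isCont_def filterlim_at_split)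
  ultimately show ?thesis using True
    by (intro continuous_on_IccI) (auto simp: isCont_def)
next
  case False
  then show ?thesis by (cases "B = 0") auto
qed

lemma comb1: fixes a b Z :: real shows "a + b = 1 \<Longrightarrow> a*Z + b*Z = Z"
  by (metis distrib_right mult_1)

lemma KL_zero:
  fixes a b y :: real
  assumes "a > 0" "b > 0" "a + b = 1" "y \<ge> 0"
  shows "xlogx (a*y) + xlogx (b*y) - xlogx y - (a*y)*ln a - (b*y)*ln b = 0"
proof (cases "y = 0")
  case True then show ?thesis by (simp add: xlogx_def)
next
  case False
  then have y: "y > 0" using assms by simp
  have "xlogx (a*y) + xlogx (b*y) - xlogx y - (a*y)*ln a - (b*y)*ln b
        = a*(y*ln y) + b*(y*ln y) - y * ln y"
    using assms y by (simp add: xlogx_def ln_mult algebra_simps)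
  then show ?thesis using assms comb1[of a b "y * ln y"] by (simp add: algebra_simps)
qed

locale pq =
  fixes p q :: real
  assumes q0: "0 < q" and qp: "q < p" and p1: "p < 1" and pq1: "p + q = 1"
begin

lemma p0: "p > 0" using q0 qp by simp
lemma q1: "q < 1" using qp p1 by simp
lemma ln2q: "ln (2*q) < 0" using q0 qp pq1 by (intro ln_less_zero) auto
lemma lnq: "ln q < 0" using q0 q1 by simp
lemma lnc: "ln (q*(1+2*p)) < 0"
proof -
  have pe: "p = 1 - q" using pq1 by simp
  have "(1-q)*(1-2*q) > 0" using q0 qp pq1 by (intro mult_pos_pos) auto
  moreover have "q*(1+2*p) = 1 - (1-q)*(1-2*q)" unfolding pe by (simp add: algebra_simps)
  ultimately have "q*(1+2*p) < 1" by linarith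
  then show ?thesis using q0 p0 by (intro ln_less_zero) auto
qed
lemma ln2pq: "ln (2*p*q) < ln (2*q)"
  using q0 p0 p1 by (subst ln_less_cancel_iff) auto

lemma gfun_KL_A:
  "gfun p q x y + x * ln (2*q) = xlogx x + xlogx (y-x) - xlogx y - x*ln p - (y-x)*ln q"
  using p0 q0 by (simp add: gfun_def ln_mult algebra_simps)

lemma gA:
  assumes "0 \<le> x" "x \<le> y"
  shows "gfun p q x y \<ge> - x * ln (2*q)" and "gfun p q x y = - x * ln (2*q) \<Longrightarrow> x = p*y"
proof -
  note K = KL[of p q x "y-x"]
  show "gfun p q x y \<ge> - x * ln (2*q)" using K(1) p0 q0 pq1 assms gfun_KL_A[of x y] by simp
  assume "gfun p q x y = - x * ln (2*q)"
  then show "x = p*y" using K(2) p0 q0 pq1 assms gfun_KL_A[of x y] by simp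
qed

lemma gA_eq:
  assumes "0 \<le> x" shows "gfun p q x (x/p) = - x * ln (2*q)"
proof -
  have "x = p * (x/p)" using p0 by simp
  moreover have "x/p - x = q * (x/p)" using p0 pq1 comb1[of p q "x/p"] by (simp add: algebra_simps)
  moreover have "x/p \<ge> 0" using assms p0 by simp
  ultimately show ?thesis
    using KL_zero[of p q "x/p"] gfun_KL_A[of x "x/p"] p0 q0 pq1 by simp
qed

definition "r = 2*p/(1+2*p)"
definition "s = 1/(1+2*p)"

lemma rs: "r > 0" "s > 0" "r + s = 1"
  using p0 by (auto simp: r_def s_def field_simps)

lemma gfun_KL_B:
  "gfun p q x y + y * ln (q*(1+2*p)) = xlogx x + xlogx (y-x) - xlogx y - x*ln r - (y-x)*ln s"
proof -
  have lr: "ln r = ln 2 + ln p - ln (1+2*p)" and ls: "ln s = - ln (1+2*p)"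
   and lc: "ln (q*(1+2*p)) = ln q + ln (1+2*p)" and l2: "ln (2*p) = ln 2 + ln p"
    using p0 q0 by (auto simp: r_def s_def ln_div ln_mult)
  show ?thesis unfolding gfun_def lr ls lc l2 by (simp add: algebra_simps)
qed

lemma gB:
  assumes "0 \<le> x" "x \<le> y"
  shows "gfun p q x y \<ge> - y * ln (q*(1+2*p))" and "gfun p q x y = - y * ln (q*(1+2*p)) \<Longrightarrow> x = r*y"
proof -
  note K = KL[of r s x "y-x"]
  show "gfun p q x y \<ge> - y * ln (q*(1+2*p))" using K(1) rs assms gfun_KL_B[of x y] by simp
  assume "gfun p q x y = - y * ln (q*(1+2*p))"
  then show "x = r*y" using K(2) rs assms gfun_KL_B[of x y] by simp
qed

lemma gB_eq:
  assumes "0 \<le> y" shows "gfun p q (r*y) y = - y * ln (q*(1+2*p))"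
proof -
  have "y - r*y = s*y" using rs comb1[of r s y] by (auto simp: algebra_simps)
  then show ?thesis
    using KL_zero[of r s y] gfun_KL_B[of "r*y" y] rs assms by simp
qed

end


lemma dxl: assumes "t > 0" shows "(xlogx has_real_derivative ln t + 1) (at t)"
proof -
  have "((\<lambda>t. t * ln t) has_real_derivative ln t + 1) (at t)"
    using assms by (auto intro!: derivative_eq_intros)
  then show ?thesis
    by (rule has_field_derivative_transform_within_open[of _ _ _ "{0<..}"])
       (use assms in \<open>auto simp: xlogx_def\<close>)
qed

context pq begin

lemma g_expand: "gfun p q x = (\<lambda>y. xlogx x - xlogx y + xlogx (y - x) - x * ln (2*p) - y * ln q)"
  by (simp add: gfun_def fun_eq_iff)

lemma g_deriv:
  assumes "0 \<le> x" "x < y"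
  shows "(gfun p q x has_real_derivative (ln (y - x) - ln y - ln q)) (at y)"
proof -
  have d1: "(xlogx has_real_derivative ln y + 1) (at y)" using assms by (intro dxl) auto
  have d2: "((\<lambda>y. xlogx (y - x)) has_real_derivative (ln (y-x) + 1) * 1) (at y)"
    using assms by (intro DERIV_chain2[OF dxl]) (auto intro!: derivative_eq_intros)
  have "((\<lambda>y. xlogx x - xlogx y + xlogx (y - x) - x * ln (2*p) - y * ln q) has_real_derivative
        (0 - (ln y + 1) + (ln (y-x) + 1) * 1 - 0 - 1 * ln q)) (at y)"
    by (intro DERIV_diff DERIV_add DERIV_const d1 d2 DERIV_cmult_right DERIV_ident)
  then show ?thesis unfolding g_expand by simp
qed

lemma g_cont:
  assumes "0 \<le> x" "x \<le> a"
  shows "continuous_on {a..b} (gfun p q x)"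
proof -
  have c1: "continuous_on {a..b} xlogx"
    by (rule continuous_on_subset[OF xlogx_cont0[of b]]) (use assms in auto)
  have c2: "continuous_on {a..b} (\<lambda>y. xlogx (y - x))"
    using assms
    by (intro continuous_on_compose2[OF xlogx_cont0[of "b - x"]]) (auto intro!: continuous_intros)
  show ?thesis unfolding g_expand
    by (intro continuous_intros c1 c2)
qed

lemma g_dec:
  assumes "0 < x" "x \<le> a" "a < b" "b \<le> x/p"
  shows "gfun p q x b < gfun p q x a"
proof (rule DERIV_neg_imp_decreasing_open[OF assms(3)])
  fix y assume y: "a < y" "y < b"
  have "y - x < q * y"
  proof -
    have "y < x/p" using y assms by linarith
    then have "y * p < x" using p0 by (simp add: pos_less_divide_eq)
    then have "p * y < x" by (simp add: mult.commute)
    then show ?thesis using pq1 comb1[of p q y] by linarith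
  qed
  then have "ln (y - x) < ln (q * y)" using y assms q0 by (subst ln_less_cancel_iff) auto
  then have "ln (y - x) - ln y - ln q < 0" using y assms q0 by (simp add: ln_mult)
  then show "\<exists>d. (gfun p q x has_real_derivative d) (at y) \<and> d < 0"
    using g_deriv[of x y] y assms by auto
next
  show "continuous_on {a..b} (gfun p q x)" using g_cont assms by auto
qed

lemma g_inc:
  assumes "0 < x" "x/p \<le> a" "a < b"
  shows "gfun p q x a < gfun p q x b"
proof (rule DERIV_pos_imp_increasing_open[OF assms(3)])
  have xa: "x < x/p" using assms p0 p1 by (simp add: less_divide_eq)
  fix y assume y: "a < y" "y < b"
  have "q * y < y - x"
  proof -
    have "x/p < y" using y assms by linarith
    then have "x < y * p" using p0 by (simp add: pos_divide_less_eq)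
    then have "p * y > x" by (simp add: mult.commute)
    then show ?thesis using pq1 comb1[of p q y] by linarith
  qed
  moreover have "x < y" using xa y assms by linarith
  ultimately have "ln (q * y) < ln (y - x)" using y assms q0 by (subst ln_less_cancel_iff) auto
  then have "ln (y - x) - ln y - ln q > 0" using y assms q0 \<open>x < y\<close> by (simp add: ln_mult)
  then show "\<exists>d. (gfun p q x has_real_derivative d) (at y) \<and> d > 0"
    using g_deriv[of x y] \<open>x < y\<close> assms by auto
next
  have "x < x/p" using assms p0 p1 by (simp add: less_divide_eq)
  then show "continuous_on {a..b} (gfun p q x)" using g_cont assms by auto
qed

end

context pq begin

lemma g_at_x: "gfun p q x x = - x * ln (2*p*q)"
  using p0 q0 by (simp add: gfun_def xlogx_def ln_mult algebra_simps)

lemma count: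
  assumes x0: "0 < x" and xl: "- x * ln (2*q) < 1"
  shows "- x * ln (2*p*q) < 1 \<Longrightarrow> card {y. x \<le> y \<and> gfun p q x y = 1} = 1"
    and "- x * ln (2*p*q) \<ge> 1 \<Longrightarrow> card {y. x \<le> y \<and> gfun p q x y = 1} = 2"
proof -
  define h where "h = gfun p q x"
  define m where "m = x/p"
  have xm: "x < m" using x0 p0 p1 by (simp add: m_def less_divide_eq)
  have hm: "h m < 1" using gA_eq[of x] x0 xl by (simp add: h_def m_def)
  define kap where "kap = -1 / ln (q*(1+2*p))"
  have kap: "- kap * ln (q*(1+2*p)) = 1" using lnc by (simp add: kap_def)
  define Y where "Y = max (m + 1) kap"
  have "h Y \<ge> - Y * ln (q*(1+2*p))" unfolding h_def
    using gB(1)[of x Y] x0 xm by (simp add: Y_def)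
  moreover have "- Y * ln (q*(1+2*p)) \<ge> - kap * ln (q*(1+2*p))"
    using lnc by (intro mult_right_mono_neg) (auto simp: Y_def)
  ultimately have hY: "h Y \<ge> 1" using kap by linarith
  have mY: "m < Y" by (simp add: Y_def)
  obtain y2 where y2: "m \<le> y2" "y2 \<le> Y" "h y2 = 1"
    using IVT'[of h m 1 Y] hm hY mY g_cont[of x m Y] x0 xm unfolding h_def by auto
  have y2m: "m < y2" using y2 hm by (cases "y2 = m") auto
  have up: "y = y2" if "m \<le> y" "h y = 1" for y
  proof (rule ccontr)
    assume "y \<noteq> y2"
    then consider "y < y2" | "y2 < y" by linarith
    then show False
      using g_inc[of x y y2] g_inc[of x y2 y] that y2 x0 unfolding h_def m_def by auto
  qed
  have low: "h y < h x" if "x < y" "y \<le> m" for y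
    using g_dec[of x x y] that x0 unfolding h_def m_def by auto
  have T: "{y. x \<le> y \<and> gfun p q x y = 1} = {y. x \<le> y \<and> h y = 1}" by (simp add: h_def)
  show "- x * ln (2*p*q) < 1 \<Longrightarrow> card {y. x \<le> y \<and> gfun p q x y = 1} = 1"
  proof -
    assume a: "- x * ln (2*p*q) < 1"
    have hx: "h x < 1" using a g_at_x by (simp add: h_def)
    have "{y. x \<le> y \<and> h y = 1} = {y2}"
    proof safe
      fix y assume "x \<le> y" "h y = 1"
      moreover have "\<not> y < m"
      proof
        assume "y < m"
        then show False using low[of y] hx \<open>x \<le> y\<close> \<open>h y = 1\<close>
          by (cases "y = x") auto
      qed
      ultimately show "y = y2" using up by auto
    next
      show "x \<le> y2" using y2m xm by linarith
    next
      show "h y2 = 1" by (rule y2(3))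
    qed
    then show ?thesis using T by simp
  qed
  show "- x * ln (2*p*q) \<ge> 1 \<Longrightarrow> card {y. x \<le> y \<and> gfun p q x y = 1} = 2"
  proof -
    assume a: "- x * ln (2*p*q) \<ge> 1"
    have hx: "h x \<ge> 1" using a g_at_x by (simp add: h_def)
    obtain y1 where y1: "x \<le> y1" "y1 \<le> m" "h y1 = 1"
      using IVT2'[of h m 1 x] hm hx xm g_cont[of x x m] x0 unfolding h_def by auto
    have y1m: "y1 < m" using y1 hm by (cases "y1 = m") auto
    have dn: "y = y1" if "x \<le> y" "y < m" "h y = 1" for y
    proof (rule ccontr)
      assume "y \<noteq> y1"
      then consider "y < y1" | "y1 < y" by linarith
      then show False
        using g_dec[of x y y1] g_dec[of x y1 y] that y1 y1m x0 unfolding h_def m_def by auto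
    qed
    have "{y. x \<le> y \<and> h y = 1} = {y1, y2}"
    proof (rule set_eqI, rule iffI)
      fix y assume "y \<in> {y. x \<le> y \<and> h y = 1}"
      then show "y \<in> {y1, y2}" using up dn by (cases "y < m") auto
    next
      fix y assume "y \<in> {y1, y2}"
      then show "y \<in> {y. x \<le> y \<and> h y = 1}" using y1 y2 y2m xm by auto
    qed
    moreover have "y1 \<noteq> y2" using y1m y2m by linarith
    ultimately show ?thesis using T by simp
  qed
qed

end


theorem lemma6p2:
  fixes p q :: real
  assumes "0 < q" "q < p" "p < 1" "p + q = 1"
  defines "S \<equiv> gsol p q"
    and "lam0 \<equiv> -1 / ln (2 * q)"
    and "kap0 \<equiv> -1 / ln (q * (1 + 2 * p))"
  shows "((\<exists>y. (lam0, y) \<in> S) \<and> (\<forall>(x, y) \<in> S. x \<le> lam0))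
       \<and> ((\<exists>x. (x, kap0) \<in> S) \<and> (\<forall>(x, y) \<in> S. y \<le> kap0))
       \<and> (\<forall>y. (lam0, y) \<in> S \<longrightarrow> y = -1 / (p * ln (2 * q)))
       \<and> (\<forall>x. (x, kap0) \<in> S \<longrightarrow> x = 2 * kap0 * p / (2 * p + 1))
       \<and> (\<forall>y. (0, y) \<in> S \<longrightarrow> y = -1 / ln q)
       \<and> (\<forall>x. ((0 \<le> x \<and> x < -1 / ln (2 * p * q)) \<or> x = lam0)
               \<longrightarrow> card {y. (x, y) \<in> S} = 1)
       \<and> (\<forall>x. (-1 / ln (2 * p * q) \<le> x \<and> x < lam0)
               \<longrightarrow> card {y. (x, y) \<in> S} = 2)"
proof -
  interpret P: pq p q using assms(1-4) by unfold_locales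
  have Smem: "(x, y) \<in> S \<longleftrightarrow> 0 \<le> x \<and> x \<le> y \<and> gfun p q x y = 1" for x y
    by (simp add: S_def gsol_def)
  have L: "ln (2*q) < 0" by (rule P.ln2q)
  have Lc: "ln (q*(1+2*p)) < 0" by (rule P.lnc)
  have lam0: "lam0 > 0" "- lam0 * ln (2*q) = 1" using L by (auto simp: lam0_def divide_neg_neg)
  have kap0: "kap0 > 0" "- kap0 * ln (q*(1+2*p)) = 1" using Lc by (auto simp: kap0_def divide_neg_neg)
  have lxm: "x \<le> lam0" if "- x * ln (2*q) \<le> 1" for x
  proof -
    have "x * (- ln (2*q)) \<le> 1" using that by simp
    moreover have "- ln (2*q) > 0" using L by simp
    ultimately have "x \<le> 1 / (- ln (2*q))" by (subst pos_le_divide_eq) auto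
    then show ?thesis by (simp add: lam0_def)
  qed
  have kxm: "y \<le> kap0" if "- y * ln (q*(1+2*p)) \<le> 1" for y
  proof -
    have "y * (- ln (q*(1+2*p))) \<le> 1" using that by simp
    moreover have "- ln (q*(1+2*p)) > 0" using Lc by simp
    ultimately have "y \<le> 1 / (- ln (q*(1+2*p)))" by (subst pos_le_divide_eq) auto
    then show ?thesis by (simp add: kap0_def)
  qed
  have lampm: "lam0 \<le> lam0 / p" using lam0 P.p0 assms(3) by (simp add: le_divide_eq)
  have c1: "(lam0, lam0/p) \<in> S" using P.gA_eq[of lam0] lam0 lampm by (simp add: Smem)
  have c2: "\<forall>(x, y) \<in> S. x \<le> lam0"
  proof clarify
    fix a b assume "(a, b) \<in> S"
    then have "0 \<le> a" "a \<le> b" "gfun p q a b = 1" by (auto simp: Smem)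
    then show "a \<le> lam0" using P.gA(1)[of a b] lxm[of a] by linarith
  qed
  have rk: "P.r * kap0 \<le> kap0" "0 \<le> P.r * kap0" using P.rs kap0 by (auto simp: P.s_def P.r_def field_simps)
  have c3: "(P.r * kap0, kap0) \<in> S" using P.gB_eq[of kap0] kap0 rk by (simp add: Smem)
  have c4: "\<forall>(x, y) \<in> S. y \<le> kap0"
  proof clarify
    fix a b assume "(a, b) \<in> S"
    then have "0 \<le> a" "a \<le> b" "gfun p q a b = 1" by (auto simp: Smem)
    then show "b \<le> kap0" using P.gB(1)[of a b] kxm[of b] by linarith
  qed
  have c5: "\<forall>y. (lam0, y) \<in> S \<longrightarrow> y = -1 / (p * ln (2 * q))"
  proof (intro allI impI)
    fix y assume "(lam0, y) \<in> S"
    then have "0 \<le> lam0" "lam0 \<le> y" "gfun p q lam0 y = 1" by (auto simp: Smem)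
    moreover have "gfun p q lam0 y = - lam0 * ln (2*q)"
      using P.gA(1)[of lam0 y] lam0 calculation by linarith
    ultimately have "lam0 = p * y" using P.gA(2) by auto
    then have "y = lam0 / p" using P.p0 by (simp add: field_simps)
    then show "y = -1 / (p * ln (2 * q))" by (simp add: lam0_def)
  qed
  have c6: "\<forall>x. (x, kap0) \<in> S \<longrightarrow> x = 2 * kap0 * p / (2 * p + 1)"
  proof (intro allI impI)
    fix x assume "(x, kap0) \<in> S"
    then have "0 \<le> x" "x \<le> kap0" "gfun p q x kap0 = 1" by (auto simp: Smem)
    moreover have "gfun p q x kap0 = - kap0 * ln (q*(1+2*p))"
      using P.gB(1)[of x kap0] kap0 calculation by linarith
    ultimately have "x = P.r * kap0" using P.gB(2) by auto
    then show "x = 2 * kap0 * p / (2 * p + 1)" by (simp add: P.r_def field_simps)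
  qed
  have g0: "gfun p q 0 y = - y * ln q" for y by (simp add: gfun_def xlogx_def)
  have c7: "\<forall>y. (0, y) \<in> S \<longrightarrow> y = -1 / ln q"
    using P.lnq by (auto simp: Smem g0 field_simps)
  have set_eq: "{y. (x, y) \<in> S} = {y. x \<le> y \<and> gfun p q x y = 1}" if "0 \<le> x" for x
    using that by (auto simp: Smem)
  have L2: "ln (2*p*q) < 0" using P.ln2pq L by linarith
  have cl: "-1 / ln (2 * p * q) < lam0"
  proof -
    have "1 / (- ln (2*p*q)) < 1 / (- ln (2*q))" using L L2 P.ln2pq by (intro divide_strict_left_mono) (auto simp: mult_neg_neg)
    then show ?thesis by (simp add: lam0_def)
  qed
  have cpos: "-1 / ln (2 * p * q) > 0" using L2 by (simp add: divide_neg_neg)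
  have conv: "x < -1 / ln (2 * p * q) \<longleftrightarrow> - x * ln (2*p*q) < 1" for x
  proof -
    have "x < -1 / ln (2 * p * q) \<longleftrightarrow> x < 1 / (- ln (2*p*q))" by simp
    also have "\<dots> \<longleftrightarrow> x * (- ln (2*p*q)) < 1" using L2 by (intro pos_less_divide_eq) simp
    finally show ?thesis by simp
  qed
  have convl: "x < lam0 \<Longrightarrow> - x * ln (2*q) < 1" for x
  proof -
    assume "x < lam0"
    then have "x < 1 / (- ln (2*q))" by (simp add: lam0_def)
    then have "x * (- ln (2*q)) < 1" using L pos_less_divide_eq[of "- ln (2*q)" x 1] by simp
    then show ?thesis by simp
  qed
  have c8: "\<forall>x. ((0 \<le> x \<and> x < -1 / ln (2 * p * q)) \<or> x = lam0) \<longrightarrow> card {y. (x, y) \<in> S} = 1"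
  proof (intro allI impI)
    fix x assume a: "(0 \<le> x \<and> x < -1 / ln (2 * p * q)) \<or> x = lam0"
    show "card {y. (x, y) \<in> S} = 1"
    proof (cases "x = lam0")
      case True
      have "{y. (x, y) \<in> S} = {lam0 / p}"
      proof (rule set_eqI, rule iffI)
        fix y assume "y \<in> {y. (x, y) \<in> S}"
        then have "y = -1 / (p * ln (2 * q))" using c5 True by blast
        moreover have "lam0 / p = -1 / (p * ln (2 * q))" using L P.p0 by (simp add: lam0_def field_simps)
        ultimately show "y \<in> {lam0 / p}" by simp
      next
        fix y assume "y \<in> {lam0 / p}" then show "y \<in> {y. (x, y) \<in> S}" using c1 True by simp
      qed
      then show ?thesis by simp
    next
      case False
      then have x: "0 \<le> x" "x < -1 / ln (2 * p * q)" using a by auto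
      show ?thesis
      proof (cases "x = 0")
        case True
        have "{y. (x, y) \<in> S} = {-1 / ln q}"
        proof (rule set_eqI, rule iffI)
          fix y assume "y \<in> {y. (x, y) \<in> S}"
          then show "y \<in> {-1 / ln q}" using c7 True by simp
        next
          fix y assume yy: "y \<in> {-1 / ln q}"
          then have "y > 0" using P.lnq by (simp add: divide_neg_neg)
          with yy show "y \<in> {y. (x, y) \<in> S}" using True P.lnq
            by (simp add: Smem g0 divide_neg_neg field_simps)
        qed
        then show ?thesis by simp
      next
        case False
        then have "0 < x" using x by simp
        moreover have "- x * ln (2*q) < 1" using convl x cl by simp
        moreover have "- x * ln (2*p*q) < 1" using conv x by simp
        ultimately show ?thesis using P.count(1)[of x] set_eq[of x] by simp
      qed
    qed
  qed
  have c9: "\<forall>x. (-1 / ln (2 * p * q) \<le> x \<and> x < lam0) \<longrightarrow> card {y. (x, y) \<in> S} = 2"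
  proof (intro allI impI)
    fix x assume a: "-1 / ln (2 * p * q) \<le> x \<and> x < lam0"
    then have "0 < x" using cpos by linarith
    moreover have "- x * ln (2*q) < 1" using convl a by simp
    moreover have "- x * ln (2*p*q) \<ge> 1" using conv[of x] a by linarith
    ultimately show "card {y. (x, y) \<in> S} = 2" using P.count(2)[of x] set_eq[of x] by simp
  qed
  show ?thesis using c1 c2 c3 c4 c5 c6 c7 c8 c9 by blast
qed

end
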